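(* Let $N\ge3$, $0\le p\le\lfloor N/2\rfloor-1$, $\nu_1,\dots,\nu_{p+1}\in\mathbb C$ and $\mathcal F=\mathcal F^{\mathcal P}_{p\prec0}(\nu_1,\dots,\nu_{p+1})$. Let $\mathfrak s\subset sl(N)$ be the subalgebra spanned by $E_{ij}$ ($i\ne j$) and $E_{ii}-E_{jj}$ with $p+2\le i,j\le N-p-1$ (a copy of $sl(N-2p-2)$). Then every $X\in\mathfrak s$ remains primitive in the twisted Hopf algebra: $\mathcal F\,\Delta(X)\,\mathcal F^{-1}=X\otimes1+1\otimes X$.
   Context: Work over $\mathbb C$ with $U=U(sl(N))$ with primitive generators ($\Delta(x)=x\otimes1+1\otimes x$). $E_{ij}$ are matrix units of $gl(N)$, $I=\sum_sE_{ss}$. $\xi$ is a formal parameter and all computations are in $\xi$-adically completed algebras $U[[\xi]]$, $(U\otimes U)[[\xi]]$. $\sigma_{ij}(c):=\ln(1+\xi cE_{ij})$, $H^{\mathcal P}_k:=E_{kk}-\frac1NI$. For $0\le k\le\lfloor N/2\rfloor-1$, $\mathcal F^{\mathcal P}_k(\nu):=\big(\prod_{s=k+2}^{N-k-1}\exp(\xi\nu E_{k+1,s}\otimes E_{s,N-k})\big)\exp(H^{\mathcal P}_{k+1}\otimes\sigma_{k+1,N-k}(\nu))$, and $\mathcal F^{\mathcal P}_{p\prec0}(\nu_1,\dots,\nu_{p+1}):=\mathcal F^{\mathcal P}_p(\nu_{p+1})\cdots\mathcal F^{\mathcal P}_0(\nu_1)$. *)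

theory Defs
  imports Complex_Main "HOL-Computational_Algebra.Formal_Power_Series"
begin

(* An associative complex algebra is modelled as a ring 'a together with a
   ring homomorphism sc : complex => 'a onto central elements (scalars). *)
definition cplx_alg :: "(complex \<Rightarrow> 'a::ring_1) \<Rightarrow> bool" where
  "cplx_alg sc \<longleftrightarrow> sc 0 = 0 \<and> sc 1 = 1 \<and>
     (\<forall>a b. sc (a + b) = sc a + sc b) \<and> (\<forall>a b. sc (a * b) = sc a * sc b) \<and>
     (\<forall>a x. sc a * x = x * sc a)"

definition gl_rep :: "nat \<Rightarrow> (nat \<Rightarrow> nat \<Rightarrow> 'a::ring_1) \<Rightarrow> bool" where
  "gl_rep N e \<longleftrightarrow> (\<forall>i\<in>{1..N}. \<forall>j\<in>{1..N}. \<forall>k\<in>{1..N}. \<forall>l\<in>{1..N}.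
     e i j * e k l - e k l * e i j
       = (if j = k then e i l else 0) - (if l = i then e k j else 0))"

(* the two tensor legs commute: E_ij (x) 1 and 1 (x) E_kl *)
definition legs_commute :: "nat \<Rightarrow> (nat \<Rightarrow> nat \<Rightarrow> 'a::ring_1) \<Rightarrow> (nat \<Rightarrow> nat \<Rightarrow> 'a) \<Rightarrow> bool" where
  "legs_commute N e1 e2 \<longleftrightarrow> (\<forall>i\<in>{1..N}. \<forall>j\<in>{1..N}. \<forall>k\<in>{1..N}. \<forall>l\<in>{1..N}.
     e1 i j * e2 k l = e2 k l * e1 i j)"

(* exp of a formal power series in xi with zero constant term:
   coefficient n of sum_k A^k/k! only involves k <= n *)
definition fexp :: "(complex \<Rightarrow> 'a::ring_1) \<Rightarrow> 'a fps \<Rightarrow> 'a fps" where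
  "fexp sc A = Abs_fps (\<lambda>n. \<Sum>k\<le>n. sc (1 / of_nat (fact k)) * fps_nth (A ^ k) n)"

definition fln1p :: "(complex \<Rightarrow> 'a::ring_1) \<Rightarrow> 'a \<Rightarrow> 'a fps" where
  "fln1p sc x = Abs_fps (\<lambda>n. if n = 0 then 0 else sc ((-1) ^ (n + 1) / of_nat n) * x ^ n)"

definition Iden :: "nat \<Rightarrow> (nat \<Rightarrow> nat \<Rightarrow> 'a::ring_1) \<Rightarrow> 'a" where
  "Iden N e = (\<Sum>s=1..N. e s s)"

definition HP :: "(complex \<Rightarrow> 'a::ring_1) \<Rightarrow> nat \<Rightarrow> (nat \<Rightarrow> nat \<Rightarrow> 'a) \<Rightarrow> nat \<Rightarrow> 'a" where
  "HP sc N e k = e k k - sc (1 / of_nat N) * Iden N e"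

definition sigmaP :: "(complex \<Rightarrow> 'a::ring_1) \<Rightarrow> (nat \<Rightarrow> nat \<Rightarrow> 'a) \<Rightarrow> nat \<Rightarrow> nat \<Rightarrow> complex \<Rightarrow> 'a fps" where
  "sigmaP sc e i j c = fln1p sc (sc c * e i j)"

(* F^P_k(nu); first tensor leg = e1, second = e2 *)
definition FP :: "(complex \<Rightarrow> 'a::ring_1) \<Rightarrow> nat \<Rightarrow> (nat \<Rightarrow> nat \<Rightarrow> 'a) \<Rightarrow> (nat \<Rightarrow> nat \<Rightarrow> 'a)
                   \<Rightarrow> nat \<Rightarrow> complex \<Rightarrow> 'a fps" where
  "FP sc N e1 e2 k \<nu> =
     prod_list (map (\<lambda>s. fexp sc (fps_X * fps_const (sc \<nu> * e1 (k+1) s * e2 s (N-k))))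
                    [k+2..<N-k])
     * fexp sc (fps_const (HP sc N e1 (k+1)) * sigmaP sc e2 (k+1) (N-k) \<nu>)"

definition FPchain :: "(complex \<Rightarrow> 'a::ring_1) \<Rightarrow> nat \<Rightarrow> (nat \<Rightarrow> nat \<Rightarrow> 'a) \<Rightarrow> (nat \<Rightarrow> nat \<Rightarrow> 'a)
                   \<Rightarrow> nat \<Rightarrow> (nat \<Rightarrow> complex) \<Rightarrow> 'a fps" where
  "FPchain sc N e1 e2 p \<nu> = prod_list (map (\<lambda>k. FP sc N e1 e2 k (\<nu> (k+1))) (rev [0..<p+1]))"

end

theory Submission imports Defs begin
unbundle fps_syntax

lemma binomial_commute:
  fixes a b :: "'a::ring_1"
  assumes ab: "a * b = b * a"
  shows "(a + b)^n = (\<Sum>k\<le>n. (of_nat (n choose k)) * a^k * b^(n-k))"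
proof (induct n)
  case 0
  then show ?case by simp
next
  case (Suc n)
  have bak: "b * a^k = a^k * b" for k using power_commuting_commutes[OF ab] by simp
  have decomp: "{0..n+1} = {0} \<union> {n + 1} \<union> {1..n}" and decomp2: "{0..n} = {0} \<union> {1..n}"
    by auto
  have "(a + b)^(n+1) = (a + b) * (\<Sum>k\<le>n. of_nat (n choose k) * a^k * b^(n - k))"
    using Suc.hyps by simp
  also have "\<dots> = a * (\<Sum>k\<le>n. of_nat (n choose k) * a^k * b^(n-k)) +
      b * (\<Sum>k\<le>n. of_nat (n choose k) * a^k * b^(n-k))"
    by (rule distrib_right)
  also have "\<dots> = (\<Sum>k\<le>n. of_nat (n choose k) * a^(k+1) * b^(n-k)) +
      (\<Sum>k\<le>n. of_nat (n choose k) * a^k * b^(n - k + 1))"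
  proof -
    have "a * (of_nat (n choose k) * a^k * b^(n-k)) = of_nat (n choose k) * a^(k+1) * b^(n-k)" for k
    proof -
      have "a * of_nat (n choose k) = of_nat (n choose k) * a" by (simp add: mult_of_nat_commute)
      then show ?thesis by (simp add: mult.assoc[symmetric])
    qed
    moreover have "b * (of_nat (n choose k) * a^k * b^(n-k)) = of_nat (n choose k) * a^k * b^(n-k+1)" for k
    proof -
      have "b * of_nat (n choose k) = of_nat (n choose k) * b" by (simp add: mult_of_nat_commute)
      then have "b * (of_nat (n choose k) * a^k * b^(n-k)) = of_nat (n choose k) * (b * a^k) * b^(n-k)"
        by (simp add: mult.assoc[symmetric])
      also have "\<dots> = of_nat (n choose k) * a^k * (b * b^(n-k))" by (simp add: bak mult.assoc)
      finally show ?thesis by simp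
    qed
    ultimately show ?thesis by (simp add: sum_distrib_left)
  qed
  also have "\<dots> = (\<Sum>k\<le>n. of_nat (n choose k) * a^k * b^(n + 1 - k)) +
      (\<Sum>k=1..n+1. of_nat (n choose (k - 1)) * a^k * b^(n + 1 - k))"
    by (simp add: atMost_atLeast0 sum.shift_bounds_cl_Suc_ivl Suc_diff_le del: sum.cl_ivl_Suc add: add.commute)
  also have "\<dots> = b^(n + 1) +
      (\<Sum>k=1..n. of_nat (n choose k) * a^k * b^(n + 1 - k)) + (a^(n + 1) +
      (\<Sum>k=1..n. of_nat (n choose (k - 1)) * a^k * b^(n + 1 - k)))"
      using sum.nat_ivl_Suc' [of 1 n "\<lambda>k. of_nat (n choose (k-1)) * a ^ k * b ^ (n + 1 - k)"]
    by (simp add: sum.atLeast_Suc_atMost atMost_atLeast0)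
  also have "\<dots> = a^(n + 1) + b^(n + 1) +
      (\<Sum>k=1..n. of_nat (n + 1 choose k) * a^k * b^(n + 1 - k))"
  proof -
    have "(\<Sum>k=1..n. of_nat (n choose k) * a^k * b^(n + 1 - k)) + (\<Sum>k=1..n. of_nat (n choose (k - 1)) * a^k * b^(n + 1 - k))
       = (\<Sum>k=1..n. of_nat (n + 1 choose k) * a^k * b^(n + 1 - k))"
      unfolding sum.distrib[symmetric]
      by (rule sum.cong) (auto simp: choose_reduce_nat distrib_right)
    then show ?thesis by (simp add: algebra_simps)
  qed
  also have "\<dots> = (\<Sum>k\<le>n+1. of_nat (n + 1 choose k) * a^k * b^(n + 1 - k))"
    using decomp by (simp add: atMost_atLeast0 algebra_simps)
  finally show ?case
    by simp
qed

lemma sc_props: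
  assumes "cplx_alg sc"
  shows "sc 0 = 0" "sc 1 = 1" "sc (a + b) = sc a + sc b" "sc (a * b) = sc a * sc b"
    "sc a * x = x * sc a"
  using assms unfolding cplx_alg_def by blast+

lemma sc_of_nat:
  assumes "cplx_alg sc" shows "sc (of_nat n) = of_nat n"
  by (induct n) (simp_all add: sc_props(1,2,3)[OF assms])

definition Eexp :: "(complex \<Rightarrow> 'a::ring_1) \<Rightarrow> 'a \<Rightarrow> 'a fps" where
  "Eexp sc y = Abs_fps (\<lambda>n. sc (1 / of_nat (fact n)) * y ^ n)"

lemma Xconst_power:
  "(fps_X * fps_const (y::'a::ring_1)) ^ k = fps_X ^ k * fps_const (y ^ k)"
proof (induct k)
  case (Suc k)
  have "(fps_X * fps_const y) ^ Suc k = fps_X * fps_const y * (fps_X ^ k * fps_const (y ^ k))"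
    by (simp add: Suc)
  also have "\<dots> = fps_X * (fps_X ^ k * fps_const y) * fps_const (y ^ k)"
    by (simp add: mult.assoc fps_mult_fps_X_power_commute)
  also have "\<dots> = fps_X ^ Suc k * fps_const (y ^ Suc k)"
    by (simp add: mult.assoc)
  finally show ?case .
qed simp

lemma fexp_Xconst:
  "fexp sc (fps_X * fps_const y) = Eexp sc y"
proof -
  have "(\<Sum>k\<le>n. sc (1 / of_nat (fact k)) * ((fps_X * fps_const y) ^ k) $ n)
        = sc (1 / of_nat (fact n)) * y ^ n" for n
  proof -
    have "(\<Sum>k\<le>n. sc (1 / of_nat (fact k)) * ((fps_X * fps_const y) ^ k) $ n)
        = (\<Sum>k\<le>n. if k = n then sc (1 / of_nat (fact k)) * y ^ k else 0)"
      by (rule sum.cong) (auto simp: Xconst_power fps_X_power_mult_nth)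
    then show ?thesis by simp
  qed
  then show ?thesis unfolding fexp_def Eexp_def by simp
qed

lemma central_assoc:
  fixes s1 s2 u v :: "'a::ring_1"
  assumes "\<And>x. s2 * x = x * s2"
  shows "s1 * u * (s2 * v) = s1 * s2 * (u * v)"
  by (metis assms mult.assoc)

lemma Eexp_mult:
  assumes sc: "cplx_alg sc" and yz: "y * z = z * y"
  shows "Eexp sc y * Eexp sc z = Eexp sc (y + z)"
proof (rule fps_ext)
  fix n
  have "(Eexp sc y * Eexp sc z) $ n
      = (\<Sum>i=0..n. sc (1 / of_nat (fact i)) * y ^ i * (sc (1 / of_nat (fact (n - i))) * z ^ (n - i)))"
    by (simp add: Eexp_def fps_mult_nth mult.assoc)
  also have "\<dots> = (\<Sum>i=0..n. sc (1 / of_nat (fact i) * (1 / of_nat (fact (n - i)))) * (y ^ i * z ^ (n - i)))"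
    by (rule sum.cong) (simp_all only: sc_props(4)[OF sc] central_assoc[OF sc_props(5)[OF sc]])
  also have "\<dots> = (\<Sum>i=0..n. sc (1 / of_nat (fact n)) * (of_nat (n choose i) * y ^ i * z ^ (n - i)))"
  proof (rule sum.cong)
    fix i assume "i \<in> {0..n}"
    then have le: "i \<le> n" by simp
    have "(1::complex) / of_nat (fact i) * (1 / of_nat (fact (n - i)))
        = 1 / of_nat (fact n) * of_nat (n choose i)"
      using le by (simp add: binomial_fact field_simps)
    then show "sc (1 / of_nat (fact i) * (1 / of_nat (fact (n - i)))) * (y ^ i * z ^ (n - i))
       = sc (1 / of_nat (fact n)) * (of_nat (n choose i) * y ^ i * z ^ (n - i))"
      by (simp only: sc_props(4)[OF sc] sc_of_nat[OF sc] mult.assoc)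
  qed simp
  also have "\<dots> = sc (1 / of_nat (fact n)) * (y + z) ^ n"
    by (simp add: binomial_commute[OF yz] sum_distrib_left atMost_atLeast0)
  finally show "(Eexp sc y * Eexp sc z) $ n = Eexp sc (y + z) $ n"
    by (simp add: Eexp_def)
qed

lemma Eexp_0:
  assumes sc: "cplx_alg sc" shows "Eexp sc 0 = 1"
  by (rule fps_ext) (simp add: Eexp_def sc_props(1,2)[OF sc] power_0_left)

lemma comm_sum_list:
  fixes x :: "'a::ring_1"
  shows "(\<And>t. t \<in> set xs \<Longrightarrow> x * f t = f t * x) \<Longrightarrow> x * sum_list (map f xs) = sum_list (map f xs) * x"
  by (induct xs) (auto simp: distrib_left distrib_right)

lemma central_comm:
  fixes s t d :: "'a::ring_1"
  assumes "\<And>x. s * x = x * s" "t * d = d * t"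
  shows "(s * t) * d = d * (s * t)"
  by (metis assms mult.assoc)

lemma prod_Eexp:
  assumes sc: "cplx_alg sc"
    and pw: "\<And>s t. s \<in> set xs \<Longrightarrow> t \<in> set xs \<Longrightarrow> y s * y t = y t * y s"
  shows "prod_list (map (\<lambda>s. fexp sc (fps_X * fps_const (y s))) xs) = Eexp sc (sum_list (map y xs))"
  using pw
proof (induct xs)
  case Nil then show ?case by (simp add: Eexp_0[OF sc])
next
  case (Cons x xs)
  have c: "y x * sum_list (map y xs) = sum_list (map y xs) * y x"
    by (rule comm_sum_list) (simp add: Cons.prems)
  show ?case using Cons by (simp add: fexp_Xconst Eexp_mult[OF sc c])
qed

lemma fps_comm_const_iff:
  fixes A :: "'a::ring_1 fps"
  shows "A * fps_const d = fps_const d * A \<longleftrightarrow> (\<forall>n. A $ n * d = d * A $ n)"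
  by (simp add: fps_eq_iff)

lemma fexp_comm:
  assumes sc: "cplx_alg sc" and A: "A * fps_const d = fps_const d * A"
  shows "fexp sc A * fps_const d = fps_const d * fexp sc A"
proof -
  have "A ^ k * fps_const d = fps_const d * A ^ k" for k
    by (rule power_commuting_commutes[OF A])
  then have h: "(A ^ k) $ n * d = d * (A ^ k) $ n" for k n
    by (simp add: fps_comm_const_iff)
  show ?thesis unfolding fps_comm_const_iff fexp_def
    by (simp add: sum_distrib_left sum_distrib_right central_comm[OF sc_props(5)[OF sc] h])
qed

lemma Eexp_comm:
  assumes sc: "cplx_alg sc" and A: "Y * d = d * Y"
  shows "Eexp sc Y * fps_const d = fps_const d * Eexp sc Y"
  unfolding fps_comm_const_iff Eexp_def
  by (simp add: central_comm[OF sc_props(5)[OF sc] power_commuting_commutes[OF A]])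

lemma fexp_nth0:
  assumes sc: "cplx_alg sc" shows "fexp sc A $ 0 = 1"
  by (simp add: fexp_def sc_props[OF sc])

lemma prod_list_comm:
  "(\<And>x. x \<in> set xs \<Longrightarrow> x * c = c * x) \<Longrightarrow> prod_list xs * c = c * prod_list xs"
  by (induct xs) (simp_all add: mult.assoc, metis mult.assoc)

lemma prod_list_nth0:
  "(\<And>x. x \<in> set xs \<Longrightarrow> x $ 0 = (1::'a::ring_1)) \<Longrightarrow> prod_list xs $ 0 = 1"
  by (induct xs) simp_all

lemma geom_tel1:
  fixes g :: "'a::ring_1"
  shows "(1 - g) * (\<Sum>k\<le>n. g^k) = 1 - g^(Suc n)"
proof (induct n)
  case (Suc n)
  have "(1 - g) * (\<Sum>k\<le>Suc n. g^k) = (1 - g) * (\<Sum>k\<le>n. g^k) + (1 - g) * g^Suc n"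
    by (simp only: sum.atMost_Suc distrib_left)
  also have "\<dots> = 1 - g^Suc n + (g^Suc n - g^Suc (Suc n))"
    by (subst Suc) (simp add: left_diff_distrib)
  finally show ?case by simp
qed simp
lemma geom_tel2:
  fixes g :: "'a::ring_1"
  shows "(\<Sum>k\<le>n. g^k) * (1 - g) = 1 - g^(Suc n)"
proof (induct n)
  case (Suc n)
  have "(\<Sum>k\<le>Suc n. g^k) * (1 - g) = (\<Sum>k\<le>n. g^k) * (1 - g) + g^Suc n * (1 - g)"
    by (simp only: sum.atMost_Suc distrib_right)
  also have "\<dots> = 1 - g^Suc n + (g^Suc n - g^Suc (Suc n))"
    by (subst Suc) (simp add: right_diff_distrib power_Suc2 del: power_Suc)
  finally show ?case by simp
qed simp

lemma pow_nth_small: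
  fixes g :: "'a::ring_1 fps"
  assumes "g $ 0 = 0"
  shows "n < k \<Longrightarrow> (g ^ k) $ n = 0"
proof (induct k arbitrary: n)
  case (Suc k)
  have "(g ^ Suc k) $ n = (\<Sum>i=0..n. g $ i * (g ^ k) $ (n - i))"
    by (simp add: fps_mult_nth)
  also have "\<dots> = 0"
  proof (rule sum.neutral, rule ballI)
    fix i assume "i \<in> {0..n}"
    show "g $ i * (g ^ k) $ (n - i) = 0"
    proof (cases "i = 0")
      case True then show ?thesis using assms by simp
    next
      case False
      then have "n - i < k" using Suc.prems \<open>i \<in> {0..n}\<close> by auto
      then show ?thesis using Suc.hyps by simp
    qed
  qed
  finally show ?case .
qed simp

lemma fps_inverse_ex:
  fixes f :: "'a::ring_1 fps"
  assumes f0: "f $ 0 = 1"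
  shows "\<exists>G. f * G = 1 \<and> G * f = 1"
proof -
  define g where "g = 1 - f"
  have g0: "g $ 0 = 0" using f0 by (simp add: g_def)
  have fg: "f = 1 - g" by (simp add: g_def)
  define G where "G = Abs_fps (\<lambda>n. \<Sum>k\<le>n. (g ^ k) $ n)"
  have trunc: "G $ m = (\<Sum>k\<le>n. g ^ k) $ m" if "m \<le> n" for m n
  proof -
    have "(\<Sum>k\<le>n. g ^ k) $ m = (\<Sum>k\<le>n. (g ^ k) $ m)" by (simp add: fps_sum_nth)
    also have "\<dots> = (\<Sum>k\<le>m. (g ^ k) $ m)"
    proof -
      have "(\<Sum>k\<le>n. (g ^ k) $ m) = (\<Sum>k\<le>m. (g ^ k) $ m) + (\<Sum>k\<in>{m<..n}. (g ^ k) $ m)"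
        using that by (subst sum.union_disjoint[symmetric]) (auto intro!: sum.cong)
      also have "(\<Sum>k\<in>{m<..n}. (g ^ k) $ m) = 0"
        by (rule sum.neutral) (auto intro: pow_nth_small[OF g0])
      finally show ?thesis by simp
    qed
    finally show ?thesis by (simp add: G_def)
  qed
  have "f * G = 1"
  proof (rule fps_ext)
    fix n
    have "(f * G) $ n = (f * (\<Sum>k\<le>n. g ^ k)) $ n"
      unfolding fps_mult_nth by (rule sum.cong) (auto simp: trunc[of _ n])
    also have "\<dots> = (1 - g ^ Suc n) $ n" by (simp add: fg geom_tel1)
    also have "\<dots> = 1 $ n" using pow_nth_small[OF g0, of n "Suc n"] by (simp del: power_Suc)
    finally show "(f * G) $ n = 1 $ n" .
  qed
  moreover have "G * f = 1"
  proof (rule fps_ext)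
    fix n
    have "(G * f) $ n = ((\<Sum>k\<le>n. g ^ k) * f) $ n"
      unfolding fps_mult_nth by (rule sum.cong) (auto simp: trunc[of _ n])
    also have "\<dots> = (1 - g ^ Suc n) $ n" by (simp add: fg geom_tel2)
    also have "\<dots> = 1 $ n" using pow_nth_small[OF g0, of n "Suc n"] by (simp del: power_Suc)
    finally show "(G * f) $ n = 1 $ n" .
  qed
  ultimately show ?thesis by blast
qed


lemma gl:
  assumes "gl_rep N e" "i \<in> {1..N}" "j \<in> {1..N}" "k \<in> {1..N}" "l \<in> {1..N}"
  shows "e i j * e k l - e k l * e i j = (if j = k then e i l else 0) - (if l = i then e k j else 0)"
  using assms unfolding gl_rep_def by blast

lemma legs:
  assumes "legs_commute N e1 e2" "i \<in> {1..N}" "j \<in> {1..N}" "k \<in> {1..N}" "l \<in> {1..N}"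
  shows "e1 i j * e2 k l = e2 k l * e1 i j"
  using assms unfolding legs_commute_def by blast

lemma comm_split:
  fixes x1 x2 y1 y2 :: "'a::ring_1"
  assumes "x1 * y2 = y2 * x1" "x2 * y1 = y1 * x2"
  shows "(x1 + x2) * (y1 * y2) - (y1 * y2) * (x1 + x2) = (x1 * y1 - y1 * x1) * y2 + y1 * (x2 * y2 - y2 * x2)"
proof -
  have 1: "x2 * (y1 * y2) = y1 * (x2 * y2)" using assms(2) by (metis mult.assoc)
  have 2: "y2 * x1 = x1 * y2" using assms(1) by simp
  show ?thesis
    by (simp add: distrib_left distrib_right left_diff_distrib right_diff_distrib 1 2 mult.assoc)
qed

lemma quad_comm:
  fixes x1 x2 z1 z2 :: "'a::ring_1"
  assumes "x1 * x2 = x2 * x1" "z1 * z2 = z2 * z1" "z1 * x2 = x2 * z1" "x1 * z2 = z2 * x1"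
  shows "(x1 * z1) * (x2 * z2) = (x2 * z2) * (x1 * z1)"
proof -
  have "(x1 * z1) * (x2 * z2) = x1 * (z1 * x2) * z2" by (simp add: mult.assoc)
  also have "\<dots> = (x1 * x2) * (z1 * z2)" by (simp add: assms(3) mult.assoc)
  also have "\<dots> = x2 * (x1 * z2) * z1" by (simp add: assms(1,2) mult.assoc)
  also have "\<dots> = (x2 * z2) * (x1 * z1)" by (simp add: assms(4) mult.assoc)
  finally show ?thesis .
qed

lemma diff0_eq: "(x::'a::ring_1) - y = 0 \<Longrightarrow> x = y" by simp

lemma Y_comm_u:
  fixes e1 e2 :: "nat \<Rightarrow> nat \<Rightarrow> 'a::ring_1"
  assumes g1: "gl_rep N e1" and g2: "gl_rep N e2" and lc: "legs_commute N e1 e2"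
    and a: "a \<in> {1..N}" and b: "b \<in> {1..N}" and T: "T \<subseteq> {1..N}" "finite T"
    and aT: "a \<notin> T" and bT: "b \<notin> T" and i: "i \<in> T" and j: "j \<in> T"
  shows "(e1 i j + e2 i j) * (\<Sum>s\<in>T. e1 a s * e2 s b) = (\<Sum>s\<in>T. e1 a s * e2 s b) * (e1 i j + e2 i j)"
proof (rule diff0_eq)
  have iN: "i \<in> {1..N}" and jN: "j \<in> {1..N}" using i j T by auto
  have ja: "j \<noteq> a" and bi: "b \<noteq> i" using i j aT bT by auto
  have tm: "(e1 i j + e2 i j) * (e1 a s * e2 s b) - (e1 a s * e2 s b) * (e1 i j + e2 i j)
      = (if s = j then e1 a j * e2 i b else 0) - (if s = i then e1 a j * e2 i b else 0)"
    if s: "s \<in> T" for s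
  proof -
    have sN: "s \<in> {1..N}" using s T by auto
    have "(e1 i j + e2 i j) * (e1 a s * e2 s b) - (e1 a s * e2 s b) * (e1 i j + e2 i j)
        = (e1 i j * e1 a s - e1 a s * e1 i j) * e2 s b + e1 a s * (e2 i j * e2 s b - e2 s b * e2 i j)"
      by (rule comm_split) (use legs[OF lc iN jN sN b] legs[OF lc a sN iN jN] in auto)
    also have "e1 i j * e1 a s - e1 a s * e1 i j = - (if s = i then e1 a j else 0)"
      using gl[OF g1 iN jN a sN] ja by simp
    also have "e2 i j * e2 s b - e2 s b * e2 i j = (if j = s then e2 i b else 0)"
      using gl[OF g2 iN jN sN b] bi by simp
    finally show ?thesis by auto
  qed
  have "(e1 i j + e2 i j) * (\<Sum>s\<in>T. e1 a s * e2 s b) - (\<Sum>s\<in>T. e1 a s * e2 s b) * (e1 i j + e2 i j)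
      = (\<Sum>s\<in>T. (e1 i j + e2 i j) * (e1 a s * e2 s b) - (e1 a s * e2 s b) * (e1 i j + e2 i j))"
    by (simp add: sum_distrib_left sum_distrib_right sum_subtractf)
  also have "\<dots> = (\<Sum>s\<in>T. (if s = j then e1 a j * e2 i b else 0) - (if s = i then e1 a j * e2 i b else 0))"
    by (rule sum.cong) (simp_all add: tm)
  also have "\<dots> = 0" using i j T by (simp add: sum_subtractf)
  finally show "(e1 i j + e2 i j) * (\<Sum>s\<in>T. e1 a s * e2 s b) - (\<Sum>s\<in>T. e1 a s * e2 s b) * (e1 i j + e2 i j) = 0" .
qed


lemma comm_D:
  fixes sc :: "complex \<Rightarrow> 'a::ring_1"
  assumes sc: "cplx_alg sc"
    and w: "\<And>i j. i \<in> S \<Longrightarrow> j \<in> S \<Longrightarrow> w * (e1 i j + e2 i j) = (e1 i j + e2 i j) * w"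
  shows "w * (\<Sum>i\<in>S. \<Sum>j\<in>S. sc (c i j) * (e1 i j + e2 i j))
       = (\<Sum>i\<in>S. \<Sum>j\<in>S. sc (c i j) * (e1 i j + e2 i j)) * w"
proof -
  have "w * (sc (c i j) * (e1 i j + e2 i j)) = (sc (c i j) * (e1 i j + e2 i j)) * w"
    if "i \<in> S" "j \<in> S" for i j
    using w[OF that] sc_props(5)[OF sc] by (metis mult.assoc)
  then show ?thesis
    by (simp add: sum_distrib_left sum_distrib_right)
qed

lemma cm_mult:
  fixes x y d :: "'a::ring_1"
  shows "x * d = d * x \<Longrightarrow> y * d = d * y \<Longrightarrow> (x * y) * d = d * (x * y)"
  by (metis mult.assoc)

lemma H_comm:
  fixes x s I u :: "'a::ring_1"
  assumes "x * u = u * x" "I * u = u * I" "\<And>z. s * z = z * s"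
  shows "(x - s * I) * u = u * (x - s * I)"
  using assms by (simp add: left_diff_distrib right_diff_distrib) (metis mult.assoc)

lemma sum_comm:
  fixes u :: "'a::ring_1"
  shows "(\<And>t. t \<in> A \<Longrightarrow> f t * u = u * f t) \<Longrightarrow> sum f A * u = u * sum f A"
  by (simp add: sum_distrib_left sum_distrib_right)

lemma cen1:
  fixes s P Q :: "'a::ring_1"
  assumes "\<And>z. s * z = z * s" "P * Q = Q * P"
  shows "(s * P) * (s * Q) = (s * Q) * (s * P)"
proof -
  have "(s * P) * (s * Q) = s * (s * (P * Q))" by (metis assms(1) mult.assoc)
  also have "\<dots> = (s * Q) * (s * P)" by (metis assms mult.assoc)
  finally show ?thesis .
qed
lemma cen2:
  fixes s X u :: "'a::ring_1"
  assumes "\<And>z. s * z = z * s" "u * X = X * u"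
  shows "(s * X) * u = u * (s * X)"
proof -
  have "(s * X) * u = s * (u * X)" by (simp add: assms(2) mult.assoc)
  also have "\<dots> = u * (s * X)" by (metis assms(1) mult.assoc)
  finally show ?thesis .
qed

lemma FP_comm:
  fixes sc :: "complex \<Rightarrow> 'a::ring_1" and e1 e2 :: "nat \<Rightarrow> nat \<Rightarrow> 'a" and c :: "nat \<Rightarrow> nat \<Rightarrow> complex"
  assumes sc: "cplx_alg sc" and g1: "gl_rep N e1" and g2: "gl_rep N e2" and lc: "legs_commute N e1 e2"
    and Np: "2 * p + 2 \<le> N" and kp: "k \<le> p"
  defines "Dv \<equiv> (\<Sum>i\<in>{p+2..N-p-1}. \<Sum>j\<in>{p+2..N-p-1}. sc (c i j) * (e1 i j + e2 i j))"
  shows "FP sc N e1 e2 k \<nu> * fps_const Dv = fps_const Dv * FP sc N e1 e2 k \<nu>"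
    and "FP sc N e1 e2 k \<nu> $ 0 = 1"
proof -
  define a where "a = k + 1"
  define b where "b = N - k"
  define S where "S = {p+2..N-p-1}"
  define T where "T = {k+2..<N-k}"
  have aN: "a \<in> {1..N}" and bN: "b \<in> {1..N}" using Np kp by (auto simp: a_def b_def)
  have TN: "T \<subseteq> {1..N}" and Tf: "finite T" and aT: "a \<notin> T" and bT: "b \<notin> T"
    by (auto simp: T_def a_def b_def)
  have ST: "S \<subseteq> T" using kp by (auto simp: S_def T_def)
  have aS: "a \<notin> S" and bS: "b \<notin> S" using ST aT bT by auto
  have SN: "S \<subseteq> {1..N}" using ST TN by auto
  define y where "y s = sc \<nu> * e1 (k+1) s * e2 s (N-k)" for s
  have y': "y s = sc \<nu> * (e1 a s * e2 s b)" for s by (simp add: y_def a_def b_def mult.assoc)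
  have setT: "set [k+2..<N-k] = T" by (simp add: T_def)
  have pw: "y s * y t = y t * y s" if "s \<in> set [k+2..<N-k]" "t \<in> set [k+2..<N-k]" for s t
  proof -
    have s: "s \<in> T" and t: "t \<in> T" using that setT by auto
    have sN: "s \<in> {1..N}" and tN: "t \<in> {1..N}" using s t TN by auto
    have sa: "s \<noteq> a" "t \<noteq> a" "s \<noteq> b" "t \<noteq> b" using s t aT bT by auto
    have "(e1 a s * e2 s b) * (e1 a t * e2 t b) = (e1 a t * e2 t b) * (e1 a s * e2 s b)"
    proof (rule quad_comm)
      show "e1 a s * e1 a t = e1 a t * e1 a s"
        by (rule diff0_eq) (use gl[OF g1 aN sN aN tN] sa in simp)
      show "e2 s b * e2 t b = e2 t b * e2 s b"
        by (rule diff0_eq) (use gl[OF g2 sN bN tN bN] sa in simp)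
      show "e2 s b * e1 a t = e1 a t * e2 s b" using legs[OF lc aN tN sN bN] by simp
      show "e1 a s * e2 t b = e2 t b * e1 a s" using legs[OF lc aN sN tN bN] by simp
    qed
    then show ?thesis unfolding y' by (rule cen1[OF sc_props(5)[OF sc]])
  qed
  have P: "prod_list (map (\<lambda>s. fexp sc (fps_X * fps_const (sc \<nu> * e1 (k+1) s * e2 s (N-k)))) [k+2..<N-k])
      = Eexp sc (sum_list (map y [k+2..<N-k]))"
    using prod_Eexp[OF sc, of "[k+2..<N-k]" y] pw by (simp add: y_def)
  have Ysum: "sum_list (map y [k+2..<N-k]) = sc \<nu> * (\<Sum>s\<in>T. e1 a s * e2 s b)"
    by (simp add: sum_set_upt_conv_sum_list_nat[symmetric] T_def y' sum_distrib_left)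
  have YD: "sum_list (map y [k+2..<N-k]) * Dv = Dv * sum_list (map y [k+2..<N-k])"
  proof -
    have "sum_list (map y [k+2..<N-k]) * (e1 i j + e2 i j) = (e1 i j + e2 i j) * sum_list (map y [k+2..<N-k])"
      if "i \<in> S" "j \<in> S" for i j
    proof -
      have "(e1 i j + e2 i j) * (\<Sum>s\<in>T. e1 a s * e2 s b) = (\<Sum>s\<in>T. e1 a s * e2 s b) * (e1 i j + e2 i j)"
        by (rule Y_comm_u[OF g1 g2 lc aN bN TN Tf aT bT]) (use that ST in auto)
      then show ?thesis unfolding Ysum by (rule cen2[OF sc_props(5)[OF sc]])
    qed
    then show ?thesis unfolding Dv_def S_def[symmetric] by (rule comm_D[OF sc])
  qed
  define H where "H = HP sc N e1 (k+1)"
  have HD: "H * Dv = Dv * H"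
  proof -
    have "H * (e1 i j + e2 i j) = (e1 i j + e2 i j) * H" if i: "i \<in> S" and j: "j \<in> S" for i j
    proof -
      have iN: "i \<in> {1..N}" and jN: "j \<in> {1..N}" using i j SN by auto
      have ai: "a \<noteq> i" "j \<noteq> a" using aS i j by auto
      have 1: "e1 a a * (e1 i j + e2 i j) = (e1 i j + e2 i j) * e1 a a"
      proof -
        have "e1 a a * e1 i j = e1 i j * e1 a a"
          by (rule diff0_eq) (use gl[OF g1 aN aN iN jN] ai in simp)
        moreover have "e1 a a * e2 i j = e2 i j * e1 a a" using legs[OF lc aN aN iN jN] .
        ultimately show ?thesis by (simp add: distrib_left distrib_right)
      qed
      have 2: "Iden N e1 * (e1 i j + e2 i j) = (e1 i j + e2 i j) * Iden N e1"
      proof -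
        have "(\<Sum>t=1..N. e1 t t * e1 i j - e1 i j * e1 t t)
            = (\<Sum>t=1..N. (if t = i then e1 i j else 0) - (if t = j then e1 i j else 0))"
          by (rule sum.cong) (use gl[OF g1 _ _ iN jN] in auto)
        also have "\<dots> = 0" using iN jN by (simp add: sum_subtractf)
        finally have "Iden N e1 * e1 i j = e1 i j * Iden N e1"
          unfolding Iden_def by (simp add: sum_distrib_left sum_distrib_right sum_subtractf)
        moreover have "Iden N e1 * e2 i j = e2 i j * Iden N e1"
          unfolding Iden_def by (rule sum_comm) (use legs[OF lc _ _ iN jN] in auto)
        ultimately show ?thesis by (simp add: distrib_left distrib_right)
      qed
      show ?thesis unfolding H_def HP_def a_def[symmetric]
        by (rule H_comm[OF _ _ sc_props(5)[OF sc]]) (use 1 2 in auto)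
    qed
    then show ?thesis unfolding Dv_def S_def[symmetric] by (rule comm_D[OF sc])
  qed
  have ED: "e2 a b * Dv = Dv * e2 a b"
  proof -
    have "e2 a b * (e1 i j + e2 i j) = (e1 i j + e2 i j) * e2 a b" if i: "i \<in> S" and j: "j \<in> S" for i j
    proof -
      have iN: "i \<in> {1..N}" and jN: "j \<in> {1..N}" using i j SN by auto
      have ai: "b \<noteq> i" "j \<noteq> a" using aS bS i j by auto
      have "e2 a b * e2 i j = e2 i j * e2 a b"
        by (rule diff0_eq) (use gl[OF g2 aN bN iN jN] ai in simp)
      moreover have "e2 a b * e1 i j = e1 i j * e2 a b" using legs[OF lc iN jN aN bN] by simp
      ultimately show ?thesis by (simp add: distrib_left distrib_right)
    qed
    then show ?thesis unfolding Dv_def S_def[symmetric] by (rule comm_D[OF sc])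
  qed
  define A where "A = fps_const H * sigmaP sc e2 (k+1) (N-k) \<nu>"
  have AD: "A * fps_const Dv = fps_const Dv * A"
    unfolding fps_comm_const_iff
  proof
    fix n
    have "sc q * Dv = Dv * sc q" for q using sc_props(5)[OF sc] by simp
    moreover have "(sc \<nu> * e2 a b) ^ n * Dv = Dv * (sc \<nu> * e2 a b) ^ n"
      by (rule power_commuting_commutes, rule cm_mult) (use sc_props(5)[OF sc] ED in auto)
    ultimately have "(if n = 0 then 0 else sc ((-1) ^ (n + 1) / of_nat n) * (sc \<nu> * e2 a b) ^ n) * Dv
       = Dv * (if n = 0 then 0 else sc ((-1) ^ (n + 1) / of_nat n) * (sc \<nu> * e2 a b) ^ n)"
      using cm_mult by auto
    moreover have "A $ n = H * (if n = 0 then 0 else sc ((-1) ^ (n + 1) / of_nat n) * (sc \<nu> * e2 a b) ^ n)"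
      by (simp add: A_def sigmaP_def fln1p_def a_def b_def)
    ultimately show "A $ n * Dv = Dv * A $ n"
      using cm_mult[OF HD] by simp
  qed
  have FPeq: "FP sc N e1 e2 k \<nu> = Eexp sc (sum_list (map y [k+2..<N-k])) * fexp sc A"
    unfolding FP_def P A_def H_def ..
  show "FP sc N e1 e2 k \<nu> * fps_const Dv = fps_const Dv * FP sc N e1 e2 k \<nu>"
    unfolding FPeq by (rule cm_mult[OF Eexp_comm[OF sc YD] fexp_comm[OF sc AD]])
  show "FP sc N e1 e2 k \<nu> $ 0 = 1"
    unfolding FPeq by (simp add: fexp_nth0[OF sc] Eexp_def sc_props(2)[OF sc])
qed


theorem mainTheorem3:
  fixes sc :: "complex \<Rightarrow> 'a::ring_1"
    and e1 e2 :: "nat \<Rightarrow> nat \<Rightarrow> 'a"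
    and N p :: nat and \<nu> :: "nat \<Rightarrow> complex" and c :: "nat \<Rightarrow> nat \<Rightarrow> complex"
  assumes "cplx_alg sc" and "gl_rep N e1" and "gl_rep N e2" and "legs_commute N e1 e2"
    and "N \<ge> 3" and "p \<le> N div 2 - 1"
    and "(\<Sum>i\<in>{p+2..N-p-1}. c i i) = 0"
  shows "let F = FPchain sc N e1 e2 p \<nu>;
             D = fps_const (\<Sum>i\<in>{p+2..N-p-1}. \<Sum>j\<in>{p+2..N-p-1}. sc (c i j) * (e1 i j + e2 i j))
         in \<exists>G. F * G = 1 \<and> G * F = 1 \<and> F * D * G = D"
proof -
  have Np: "2 * p + 2 \<le> N" using assms(5,6) by linarith
  define Dv where "Dv = (\<Sum>i\<in>{p+2..N-p-1}. \<Sum>j\<in>{p+2..N-p-1}. sc (c i j) * (e1 i j + e2 i j))"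
  define F where "F = FPchain sc N e1 e2 p \<nu>"
  have mem: "x \<in> set (map (\<lambda>k. FP sc N e1 e2 k (\<nu> (k+1))) (rev [0..<p+1])) \<Longrightarrow>
      x * fps_const Dv = fps_const Dv * x \<and> x $ 0 = 1" for x
    using FP_comm(1)[OF assms(1-4) Np, where c=c] FP_comm(2)[OF assms(1-4) Np] unfolding Dv_def by auto
  have FD: "F * fps_const Dv = fps_const Dv * F"
    unfolding F_def FPchain_def by (rule prod_list_comm) (use mem in blast)
  have F0: "F $ 0 = 1"
    unfolding F_def FPchain_def by (rule prod_list_nth0) (use mem in blast)
  obtain G where G: "F * G = 1" "G * F = 1" using fps_inverse_ex[OF F0] by blast
  have "F * fps_const Dv * G = fps_const Dv"
    by (simp add: FD mult.assoc G)
  then show ?thesis using G unfolding Let_def F_def[symmetric] Dv_def[symmetric] by blast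
qed

end
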